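(* For $n\ge 2$, the expected number of indices $k\in\{2,\dots,n\}$ such that the $(k-1)$-th and $k$-th boundary steps are both west steps, in a uniformly random type-B permutation tableau of size $n$, equals \[ \frac{14n-25}{24}+\frac{1}{2n}. \]
   Context: A Ferrers diagram is a left-justified array of cells whose row lengths weakly decrease from top to bottom (rows of length $0$ are allowed). Its half-perimeter is the number of rows plus the number of columns. Its southeast boundary, traversed from the northeast corner to the southwest corner, consists of $n$ unit steps, each south or west; south steps correspond to rows and west steps to columns. If the diagram has $c$ columns, the shifted Ferrers diagram is obtained by inserting $c$ new left-justified rows above it, of lengths $c,c-1,\dots,1$ from top to bottom; the rightmost cell of each inserted row is a diagonal cell. A type-B permutation tableau of size $n$ is a filling of a shifted Ferrers diagram of half-perimeter $n$ with $0$'s and $1$'s such that: (1) every column contains at least one $1$; (2) no $0$ has both a $1$ above it in its column and a $1$ to its left in its row; (3) if a diagonal cell contains $0$ then every cell of its row contains $0$. The boundary steps of the shifted diagram are those of the underlying Ferrers diagram. Let $\mathcal{B}_n$ be the set of such tableaux with uniform probability measure $\mathbb{P}_n$ and expectation $\mathbb{E}_n$. *)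

theory Defs
  imports Complex_Main
begin

datatype step = South | West

text \<open>A boundary word of the underlying Ferrers diagram, read from the NE corner
to the SW corner. South steps are rows, West steps are columns.\<close>

definition ncols :: "step list \<Rightarrow> nat" where
  "ncols w = length (filter (\<lambda>x. x = West) w)"

definition orig_rows :: "step list \<Rightarrow> nat list" where
  "orig_rows w = map (\<lambda>i. length (filter (\<lambda>x. x = West) (drop (Suc i) w)))
                     (filter (\<lambda>i. w ! i = South) [0..<length w])"

text \<open>The c inserted rows form the staircase whose diagonal cell is the top cell of each
column: inserted row r (r < c) consists of columns 0..r and its rightmost cell
(r,r) is the diagonal cell.  Columns are indexed from the left starting at 0.\<close>
definition shifted_rows :: "step list \<Rightarrow> nat list" where
  "shifted_rows w = map Suc [0..<ncols w] @ orig_rows w"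

definition cells :: "step list \<Rightarrow> (nat \<times> nat) set" where
  "cells w = {(r, j). r < length (shifted_rows w) \<and> j < shifted_rows w ! r}"

text \<open>A type-B permutation tableau of size n: boundary word w of length n and a
0/1 filling f (True = 1) of the cells of the shifted diagram (False outside).\<close>
definition is_typeB_tableau :: "nat \<Rightarrow> step list \<Rightarrow> (nat \<times> nat \<Rightarrow> bool) \<Rightarrow> bool" where
  "is_typeB_tableau n w f \<longleftrightarrow>
     length w = n \<and>
     (\<forall>p. p \<notin> cells w \<longrightarrow> \<not> f p) \<and>
     (\<forall>j < ncols w. \<exists>r. (r, j) \<in> cells w \<and> f (r, j)) \<and>
     (\<forall>r j. (r, j) \<in> cells w \<and> \<not> f (r, j) \<longrightarrow>
            \<not> ((\<exists>r' < r. f (r', j)) \<and> (\<exists>j' < j. f (r, j')))) \<and>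
     (\<forall>r < ncols w. \<not> f (r, r) \<longrightarrow> (\<forall>j. \<not> f (r, j)))"

definition typeB_tableaux :: "nat \<Rightarrow> (step list \<times> (nat \<times> nat \<Rightarrow> bool)) set" where
  "typeB_tableaux n = {(w, f). is_typeB_tableau n w f}"

definition WW_count :: "nat \<Rightarrow> step list \<Rightarrow> nat" where
  "WW_count n w = card {k \<in> {2..n}. w ! (k - 2) = West \<and> w ! (k - 1) = West}"

end

theory Submission
  imports Defs
begin


lemma ncols_snoc: "ncols (w @ [x]) = ncols w + (if x = West then 1 else 0)"
  by (simp add: ncols_def)

lemma orig_rows_snoc_S: "orig_rows (w @ [South]) = orig_rows w @ [0]"
proof -
  have "filter (\<lambda>i. (w @ [South]) ! i = South) [0..<length w] = filter (\<lambda>i. w ! i = South) [0..<length w]"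
    by (rule filter_cong) (auto simp: nth_append)
  moreover have "map (\<lambda>i. length (filter (\<lambda>x. x = West) (drop (Suc i) (w @ [South]))))
      (filter (\<lambda>i. w ! i = South) [0..<length w]) =
     map (\<lambda>i. length (filter (\<lambda>x. x = West) (drop (Suc i) w))) (filter (\<lambda>i. w ! i = South) [0..<length w])"
    by (rule map_cong) auto
  ultimately show ?thesis by (simp add: orig_rows_def)
qed

lemma orig_rows_snoc_W: "orig_rows (w @ [West]) = map Suc (orig_rows w)"
proof -
  have "filter (\<lambda>i. (w @ [West]) ! i = South) [0..<length w] = filter (\<lambda>i. w ! i = South) [0..<length w]"
    by (rule filter_cong) (auto simp: nth_append)
  moreover have "map (\<lambda>i. length (filter (\<lambda>x. x = West) (drop (Suc i) (w @ [West]))))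
      (filter (\<lambda>i. w ! i = South) [0..<length w]) =
     map (\<lambda>i. Suc (length (filter (\<lambda>x. x = West) (drop (Suc i) w)))) (filter (\<lambda>i. w ! i = South) [0..<length w])"
    by (rule map_cong) auto
  ultimately show ?thesis by (simp add: orig_rows_def comp_def)
qed

lemma orig_rows_Nil: "orig_rows [] = []" by (simp add: orig_rows_def)

lemma sr_snoc_S: "shifted_rows (w @ [South]) = shifted_rows w @ [0]"
  by (simp add: shifted_rows_def ncols_snoc orig_rows_snoc_S)

lemma sr_snoc_W: "shifted_rows (w @ [West]) = Suc 0 # map Suc (shifted_rows w)"
proof -
  have "map Suc [0..<Suc (ncols w)] = Suc 0 # map Suc (map Suc [0..<ncols w])"
    by (simp add: upt_conv_Cons map_Suc_upt del: upt_Suc)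
  then show ?thesis by (simp add: shifted_rows_def ncols_snoc orig_rows_snoc_W del: upt_Suc)
qed

definition nr :: "step list \<Rightarrow> nat" where "nr w = length (shifted_rows w)"

lemma nr_snoc: "nr (w @ [x]) = Suc (nr w)"
  by (cases x) (simp_all add: nr_def sr_snoc_S sr_snoc_W)

lemma ncols_le_nr: "ncols w \<le> nr w"
  by (simp add: nr_def shifted_rows_def)

lemma cells_snoc_S: "cells (w @ [South]) = cells w"
  by (auto simp: cells_def sr_snoc_S nth_append less_Suc_eq split: if_splits)

lemma cells_W_0: "(r, 0) \<in> cells (w @ [West]) \<longleftrightarrow> r \<le> nr w"
  by (cases r) (auto simp: cells_def sr_snoc_W nr_def)
lemma cells_W_0S: "(0, Suc j) \<notin> cells (w @ [West])"
  by (auto simp: cells_def sr_snoc_W)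
lemma cells_W_SS: "(Suc r, Suc j) \<in> cells (w @ [West]) \<longleftrightarrow> (r, j) \<in> cells w"
  by (auto simp: cells_def sr_snoc_W)

lemma cells_nr: "(r, j) \<in> cells w \<Longrightarrow> r < nr w"
  by (auto simp: cells_def nr_def)

lemma finite_cells: "finite (cells w)"
proof -
  have "cells w \<subseteq> (\<Union>r<nr w. {r} \<times> {..<shifted_rows w ! r})"
    by (auto simp: cells_def nr_def)
  then show ?thesis by (rule finite_subset) auto
qed

lemma cells_Nil: "cells [] = {}"
  by (simp add: cells_def shifted_rows_def ncols_def orig_rows_Nil)



definition Tab :: "step list \<Rightarrow> (nat \<times> nat \<Rightarrow> bool) set" where
  "Tab w = {f. is_typeB_tableau (length w) w f}"

definition avail :: "step list \<Rightarrow> (nat \<times> nat \<Rightarrow> bool) \<Rightarrow> nat set" where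
  "avail w f = {r. r < nr w \<and> (r < ncols w \<longrightarrow> f (r, r)) \<and>
     (\<forall>j. (r, j) \<in> cells w \<and> \<not> f (r, j) \<longrightarrow> \<not> (\<exists>r' < r. f (r', j)))}"

lemma avail_sub: "avail w f \<subseteq> {..<nr w}" by (auto simp: avail_def)
lemma finite_avail: "finite (avail w f)" using avail_sub finite_subset by blast

lemma Tab_finite: "finite (Tab w)"
proof -
  have "Tab w \<subseteq> (\<lambda>S p. p \<in> S) ` Pow (cells w)"
  proof
    fix f assume "f \<in> Tab w"
    then have "\<forall>p. p \<notin> cells w \<longrightarrow> \<not> f p" by (simp add: Tab_def is_typeB_tableau_def)
    then have "f = (\<lambda>p. p \<in> {p \<in> cells w. f p})" by (auto simp: fun_eq_iff)
    then show "f \<in> (\<lambda>S p. p \<in> S) ` Pow (cells w)" by blast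
  qed
  then show ?thesis using finite_cells[of w] by (meson finite_Pow_iff finite_imageI finite_subset)
qed

lemma Tab_Nil: "Tab [] = {\<lambda>_. False}"
  by (auto simp: Tab_def is_typeB_tableau_def cells_Nil ncols_def)

lemma avail_Nil: "avail [] f = {}"
  by (simp add: avail_def nr_def shifted_rows_def ncols_def orig_rows_Nil)

lemma Tab_S: "Tab (w @ [South]) = Tab w"
  by (simp add: Tab_def is_typeB_tableau_def cells_snoc_S ncols_snoc)

lemma avail_S: "avail (w @ [South]) f = insert (nr w) (avail w f)"
  using ncols_le_nr[of w]
  by (auto simp: avail_def cells_snoc_S ncols_snoc nr_snoc less_Suc_eq dest: cells_nr)

lemma card_avail_S: "card (avail (w @ [South]) f) = Suc (card (avail w f))"
proof -
  have "nr w \<notin> avail w f" using avail_sub[of w f] by auto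
  then show ?thesis by (simp add: avail_S finite_avail)
qed

definition ext :: "(nat \<times> nat \<Rightarrow> bool) \<Rightarrow> nat set \<Rightarrow> nat \<times> nat \<Rightarrow> bool" where
  "ext g H = (\<lambda>(r, j). if j = 0 then r \<in> H else if r = 0 then False else g (r - 1, j - 1))"

lemma ext_simps[simp]: "ext g H (r, 0) = (r \<in> H)" "ext g H (0, Suc j) = False"
  "ext g H (Suc r, Suc j) = g (r, j)"
  by (simp_all add: ext_def)

definition HS :: "step list \<Rightarrow> (nat \<times> nat \<Rightarrow> bool) \<Rightarrow> nat set set" where
  "HS w g = {H. H \<subseteq> insert 0 (Suc ` avail w g) \<and> H \<noteq> {}}"

lemma forall_pair_nat: "(\<forall>r j. P r j) \<longleftrightarrow> (\<forall>j. P 0 j) \<and> (\<forall>r. P (Suc r) 0) \<and> (\<forall>r j. P (Suc r) (Suc j))"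
  by (metis not0_implies_Suc)



lemma tabI:
  assumes "\<And>p. p \<notin> cells w \<Longrightarrow> \<not> f p"
    "\<And>j. j < ncols w \<Longrightarrow> \<exists>r. (r, j) \<in> cells w \<and> f (r, j)"
    "\<And>r j r' j'. (r, j) \<in> cells w \<Longrightarrow> \<not> f (r, j) \<Longrightarrow> r' < r \<Longrightarrow> f (r', j) \<Longrightarrow> j' < j \<Longrightarrow> \<not> f (r, j')"
    "\<And>r j. r < ncols w \<Longrightarrow> \<not> f (r, r) \<Longrightarrow> \<not> f (r, j)"
  shows "f \<in> Tab w"
  using assms unfolding Tab_def is_typeB_tableau_def by blast

lemma tabD:
  assumes "f \<in> Tab w"
  shows "\<And>p. p \<notin> cells w \<Longrightarrow> \<not> f p"
    "\<And>j. j < ncols w \<Longrightarrow> \<exists>r. (r, j) \<in> cells w \<and> f (r, j)"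
    "\<And>r j r' j'. (r, j) \<in> cells w \<Longrightarrow> \<not> f (r, j) \<Longrightarrow> r' < r \<Longrightarrow> f (r', j) \<Longrightarrow> j' < j \<Longrightarrow> \<not> f (r, j')"
    "\<And>r j. r < ncols w \<Longrightarrow> \<not> f (r, r) \<Longrightarrow> \<not> f (r, j)"
  using assms unfolding Tab_def is_typeB_tableau_def by blast+

lemma ext_Tab:
  assumes g: "g \<in> Tab w" and H: "H \<in> HS w g"
  shows "ext g H \<in> Tab (w @ [West])"
proof (rule tabI)
  have Hs: "H \<subseteq> insert 0 (Suc ` avail w g)" "H \<noteq> {}" using H by (auto simp: HS_def)
  have avr: "\<And>r. Suc r \<in> H \<Longrightarrow> r \<in> avail w g" using Hs by auto
  fix p assume p: "p \<notin> cells (w @ [West])"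
  obtain r j where pe: "p = (r, j)" by fastforce
  show "\<not> ext g H p"
  proof (cases j)
    case 0
    then have "r > nr w" using p pe cells_W_0 by auto
    then show ?thesis using pe 0 avr avail_sub[of w g] Hs(1) by (cases r) auto
  next
    case (Suc j0)
    then show ?thesis using p pe tabD(1)[OF g] cells_W_SS by (cases r) auto
  qed
next
  have Hs: "H \<subseteq> insert 0 (Suc ` avail w g)" "H \<noteq> {}" using H by (auto simp: HS_def)
  fix j assume j: "j < ncols (w @ [West])"
  show "\<exists>r. (r, j) \<in> cells (w @ [West]) \<and> ext g H (r, j)"
  proof (cases j)
    case 0
    obtain r where r: "r \<in> H" using Hs by auto
    have "r \<le> nr w"
    proof (cases r)
      case (Suc r0) then have "r0 \<in> avail w g" using r Hs by auto
      then show ?thesis using avail_sub[of w g] Suc by auto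
    qed simp
    then show ?thesis using r 0 cells_W_0 by auto
  next
    case (Suc j0)
    then have "j0 < ncols w" using j by (simp add: ncols_snoc)
    then obtain r where "(r, j0) \<in> cells w" "g (r, j0)" using tabD(2)[OF g] by blast
    then show ?thesis using Suc cells_W_SS by (intro exI[of _ "Suc r"]) auto
  qed
next
  have Hs: "H \<subseteq> insert 0 (Suc ` avail w g)" "H \<noteq> {}" using H by (auto simp: HS_def)
  have avr: "\<And>r. Suc r \<in> H \<Longrightarrow> r \<in> avail w g" using Hs by auto
  fix r j r' j'
  assume c: "(r, j) \<in> cells (w @ [West])" and z: "\<not> ext g H (r, j)" and r': "r' < r" "ext g H (r', j)"
    and j': "j' < j"
  obtain r0 where r0: "r = Suc r0" using r' by (cases r) auto
  obtain j0 where j0: "j = Suc j0" using j' by (cases j) auto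
  obtain r1 where r1: "r' = Suc r1" using r' j0 by (cases r') auto
  have c0: "(r0, j0) \<in> cells w" using c r0 j0 cells_W_SS by auto
  have z0: "\<not> g (r0, j0)" using z r0 j0 by simp
  have g1: "g (r1, j0)" "r1 < r0" using r' r1 j0 r0 by auto
  show "\<not> ext g H (r, j')"
  proof (cases j')
    case 0
    show ?thesis
    proof
      assume "ext g H (r, j')"
      then have "r0 \<in> avail w g" using 0 r0 avr by simp
      then show False using c0 z0 g1 by (auto simp: avail_def)
    qed
  next
    case (Suc j1)
    then show ?thesis using tabD(3)[OF g c0 z0 g1(2) g1(1), of j1] r0 j' j0 by simp
  qed
next
  have Hs: "H \<subseteq> insert 0 (Suc ` avail w g)" "H \<noteq> {}" using H by (auto simp: HS_def)
  have avr: "\<And>r. Suc r \<in> H \<Longrightarrow> r \<in> avail w g" using Hs by auto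
  fix r j assume r: "r < ncols (w @ [West])" and d: "\<not> ext g H (r, r)"
  show "\<not> ext g H (r, j)"
  proof (cases r)
    case 0
    then show ?thesis using d by (cases j) auto
  next
    case (Suc r0)
    have r0: "r0 < ncols w" using r Suc by (simp add: ncols_snoc)
    have dg: "\<not> g (r0, r0)" using d Suc by simp
    show ?thesis
    proof (cases j)
      case 0
      have "r0 \<notin> avail w g" using dg r0 by (auto simp: avail_def)
      then show ?thesis using 0 Suc avr by auto
    next
      case (Suc j0)
      then show ?thesis using tabD(4)[OF g r0 dg] \<open>r = Suc r0\<close> by simp
    qed
  qed
qed

lemma Tab_W_decomp:
  assumes F: "F \<in> Tab (w @ [West])"
  shows "\<exists>g H. g \<in> Tab w \<and> H \<in> HS w g \<and> F = ext g H"
proof -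
  define g where "g = (\<lambda>(r, j). F (Suc r, Suc j))"
  define H where "H = {r. F (r, 0)}"
  have Fe: "F = ext g H"
  proof
    fix p :: "nat \<times> nat"
    obtain r j where pe: "p = (r, j)" by fastforce
    show "F p = ext g H p"
    proof (cases j)
      case 0 then show ?thesis using pe by (simp add: H_def)
    next
      case (Suc j0)
      show ?thesis
      proof (cases r)
        case 0 then show ?thesis using pe Suc tabD(1)[OF F] cells_W_0S by auto
      next
        case (Suc r0) then show ?thesis using pe \<open>j = Suc j0\<close> by (simp add: g_def)
      qed
    qed
  qed
  have gT: "g \<in> Tab w"
  proof (rule tabI)
    fix p assume "p \<notin> cells w"
    then show "\<not> g p" using tabD(1)[OF F] cells_W_SS by (cases p) (auto simp: g_def)
  next
    fix j assume "j < ncols w"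
    then have "Suc j < ncols (w @ [West])" by (simp add: ncols_snoc)
    then obtain r where r: "(r, Suc j) \<in> cells (w @ [West])" "F (r, Suc j)" using tabD(2)[OF F] by blast
    then obtain r0 where "r = Suc r0" using cells_W_0S by (cases r) auto
    then show "\<exists>r. (r, j) \<in> cells w \<and> g (r, j)" using r cells_W_SS by (auto simp: g_def)
  next
    fix r j r' j'
    assume "(r, j) \<in> cells w" "\<not> g (r, j)" "r' < r" "g (r', j)" "j' < j"
    then show "\<not> g (r, j')" using tabD(3)[OF F, of "Suc r" "Suc j" "Suc r'" "Suc j'"] cells_W_SS
      by (auto simp: g_def)
  next
    fix r j assume "r < ncols w" "\<not> g (r, r)"
    then show "\<not> g (r, j)" using tabD(4)[OF F, of "Suc r" "Suc j"] by (auto simp: g_def ncols_snoc)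
  qed
  have HH: "H \<in> HS w g"
  proof -
    have "0 < ncols (w @ [West])" by (simp add: ncols_snoc)
    then obtain r where "F (r, 0)" using tabD(2)[OF F] by blast
    then have ne: "H \<noteq> {}" by (auto simp: H_def)
    have "H \<subseteq> insert 0 (Suc ` avail w g)"
    proof
      fix r assume rH: "r \<in> H"
      show "r \<in> insert 0 (Suc ` avail w g)"
      proof (cases r)
        case (Suc r0)
        have Fr: "F (Suc r0, 0)" using rH Suc by (simp add: H_def)
        have "(Suc r0, 0) \<in> cells (w @ [West])" using Fr tabD(1)[OF F] by blast
        then have a1: "r0 < nr w" using cells_W_0 by auto
        have a2: "r0 < ncols w \<longrightarrow> g (r0, r0)"
          using tabD(4)[OF F, of "Suc r0" 0] Fr by (auto simp: g_def ncols_snoc)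
        have a3: "\<forall>j. (r0, j) \<in> cells w \<and> \<not> g (r0, j) \<longrightarrow> \<not> (\<exists>r' < r0. g (r', j))"
        proof (intro allI impI notI)
          fix j assume j: "(r0, j) \<in> cells w \<and> \<not> g (r0, j)" and "\<exists>r' < r0. g (r', j)"
          then obtain r' where r': "r' < r0" "g (r', j)" by blast
          show False using tabD(3)[OF F, of "Suc r0" "Suc j" "Suc r'" 0] Fr j r' cells_W_SS
            by (simp add: g_def)
        qed
        have "r0 \<in> avail w g" using a1 a2 a3 by (simp add: avail_def)
        then show ?thesis using Suc by auto
      qed simp
    qed
    then show ?thesis using ne by (simp add: HS_def)
  qed
  show ?thesis using gT HH Fe by blast
qed

lemma ext_inj: "ext g H = ext g' H' \<Longrightarrow> g = g' \<and> H = H'"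
proof
  assume e: "ext g H = ext g' H'"
  show "g = g'"
  proof
    fix p :: "nat \<times> nat" obtain r j where "p = (r, j)" by fastforce
    then show "g p = g' p" using fun_cong[OF e, of "(Suc r, Suc j)"] by simp
  qed
  show "H = H'" using fun_cong[OF e, of "(_, 0)"] by auto
qed

definition AV :: "nat set \<Rightarrow> nat set \<Rightarrow> nat set" where
  "AV A H = (if 0 \<in> H then {0} else {}) \<union> Suc ` {r \<in> A. Suc r \<in> H \<or> (\<forall>x\<in>H. r < x)}"

lemma avail_ext:
  assumes g: "g \<in> Tab w" and H: "H \<in> HS w g"
  shows "avail (w @ [West]) (ext g H) = AV (avail w g) H"
proof (rule set_eqI)
  have Hs: "H \<subseteq> insert 0 (Suc ` avail w g)" "H \<noteq> {}" using H by (auto simp: HS_def)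
  fix r
  show "r \<in> avail (w @ [West]) (ext g H) \<longleftrightarrow> r \<in> AV (avail w g) H"
  proof (cases r)
    case 0
    have "\<And>j. (0, j) \<in> cells (w @ [West]) \<Longrightarrow> j = 0" using cells_W_0S by (metis not0_implies_Suc)
    then show ?thesis using 0 by (auto simp: avail_def AV_def nr_snoc ncols_snoc)
  next
    case (Suc r0)
    have "r \<in> avail (w @ [West]) (ext g H) \<longleftrightarrow>
       (r0 < nr w \<and> (r0 < ncols w \<longrightarrow> g (r0, r0)) \<and>
       (Suc r0 \<notin> H \<longrightarrow> \<not> (\<exists>r' < Suc r0. r' \<in> H)) \<and>
       (\<forall>j. (r0, j) \<in> cells w \<and> \<not> g (r0, j) \<longrightarrow> \<not> (\<exists>r' < r0. g (r', j))))"
      (is "_ \<longleftrightarrow> ?R")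
    proof
      assume a: "r \<in> avail (w @ [West]) (ext g H)"
      have 1: "r0 < nr w" using a Suc by (simp add: avail_def nr_snoc)
      have 2: "r0 < ncols w \<longrightarrow> g (r0, r0)" using a Suc by (simp add: avail_def ncols_snoc)
      have 3: "Suc r0 \<notin> H \<longrightarrow> \<not> (\<exists>r' < Suc r0. r' \<in> H)"
      proof (intro impI notI)
        assume n: "Suc r0 \<notin> H" and ex: "\<exists>r' < Suc r0. r' \<in> H"
        have "\<forall>j. (r, j) \<in> cells (w @ [West]) \<and> \<not> ext g H (r, j) \<longrightarrow> \<not> (\<exists>r' < r. ext g H (r', j))"
          using a by (simp add: avail_def)
        then have "(r, 0) \<in> cells (w @ [West]) \<and> \<not> ext g H (r, 0) \<longrightarrow> \<not> (\<exists>r' < r. ext g H (r', 0))"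
          by blast
        then show False using n ex Suc 1 cells_W_0[of "Suc r0" w] by auto
      qed
      have 4: "\<forall>j. (r0, j) \<in> cells w \<and> \<not> g (r0, j) \<longrightarrow> \<not> (\<exists>r' < r0. g (r', j))"
      proof (intro allI impI notI)
        fix j assume j: "(r0, j) \<in> cells w \<and> \<not> g (r0, j)" and ex: "\<exists>r' < r0. g (r', j)"
        then obtain r' where "r' < r0" "g (r', j)" by blast
        have "\<forall>j. (r, j) \<in> cells (w @ [West]) \<and> \<not> ext g H (r, j) \<longrightarrow> \<not> (\<exists>r' < r. ext g H (r', j))"
          using a by (simp add: avail_def)
        then have "(r, Suc j) \<in> cells (w @ [West]) \<and> \<not> ext g H (r, Suc j) \<longrightarrow> \<not> (\<exists>r' < r. ext g H (r', Suc j))"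
          by blast
        then show False using \<open>r' < r0\<close> \<open>g (r', j)\<close> Suc j cells_W_SS by force
      qed
      show ?R using 1 2 3 4 by blast
    next
      assume R: ?R
      show "r \<in> avail (w @ [West]) (ext g H)"
        unfolding avail_def
      proof (intro CollectI conjI allI impI)
        show "r < nr (w @ [West])" using R Suc by (simp add: nr_snoc)
        show "r < ncols (w @ [West]) \<Longrightarrow> ext g H (r, r)" using R Suc by (simp add: ncols_snoc)
        fix j assume j: "(r, j) \<in> cells (w @ [West]) \<and> \<not> ext g H (r, j)"
        show "\<not> (\<exists>r'<r. ext g H (r', j))"
        proof (cases j)
          case 0 then show ?thesis using R j Suc by auto
        next
          case (Suc j0)
          have "(r0, j0) \<in> cells w" "\<not> g (r0, j0)" using j Suc \<open>r = Suc r0\<close> cells_W_SS by auto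
          then have "\<not> (\<exists>r' < r0. g (r', j0))" using R by blast
          show ?thesis
          proof
            assume "\<exists>r'<r. ext g H (r', j)"
            then obtain r' where r': "r' < r" "ext g H (r', j)" by blast
            show False
            proof (cases r')
              case 0 then show False using r' Suc by simp
            next
              case (Suc r1) then show False using r' \<open>j = Suc j0\<close> \<open>r = Suc r0\<close> \<open>\<not> (\<exists>r' < r0. g (r', j0))\<close> by simp
            qed
          qed
        qed
      qed
    qed
    also have "?R \<longleftrightarrow> r0 \<in> avail w g \<and> (Suc r0 \<in> H \<or> (\<forall>x\<in>H. r0 < x))"
    proof -
      have "(Suc r0 \<notin> H \<longrightarrow> \<not> (\<exists>r' < Suc r0. r' \<in> H)) \<longleftrightarrow> (Suc r0 \<in> H \<or> (\<forall>x\<in>H. r0 < x))"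
        by (auto simp: less_Suc_eq_le not_le)
      then show ?thesis unfolding avail_def by blast
    qed
    also have "\<dots> \<longleftrightarrow> r \<in> AV (avail w g) H"
      using Suc by (auto simp: AV_def)
    finally show ?thesis .
  qed
qed




lemma sum_pow_card: "finite A \<Longrightarrow> (\<Sum>B\<in>Pow A. (y::real) ^ card B) = (1 + y) ^ card A"
proof (induction A rule: finite_induct)
  case empty then show ?case by simp
next
  case (insert x A)
  have inj: "inj_on (insert x) (Pow A)" using insert(2) by (auto simp: inj_on_def)
  have disj: "Pow A \<inter> insert x ` Pow A = {}" using insert(2) by auto
  have "(\<Sum>B\<in>Pow (insert x A). y ^ card B) = (\<Sum>B\<in>Pow A. y ^ card B) + (\<Sum>B\<in>insert x ` Pow A. y ^ card B)"
    unfolding Pow_insert using insert(1) disj by (intro sum.union_disjoint) auto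
  also have "(\<Sum>B\<in>insert x ` Pow A. y ^ card B) = (\<Sum>B\<in>Pow A. y ^ card (insert x B))"
    using inj by (simp add: sum.reindex)
  also have "\<dots> = (\<Sum>B\<in>Pow A. y * y ^ card B)"
  proof (rule sum.cong)
    fix B assume "B \<in> Pow A"
    then have "finite B" "x \<notin> B" using insert(1,2) finite_subset by auto
    then show "y ^ card (insert x B) = y * y ^ card B" by simp
  qed simp
  finally show ?case using insert by (simp add: sum_distrib_left[symmetric] algebra_simps)
qed

definition wt :: "nat set \<Rightarrow> nat set \<Rightarrow> nat" where
  "wt A B = card {r \<in> A. r \<in> B \<or> (\<forall>x\<in>B. r \<le> x)}"

lemma wt_empty: "wt A {} = card A" by (simp add: wt_def)

lemma sum_wt: "finite A \<Longrightarrow> (\<Sum>B\<in>Pow A. (y::real) ^ wt A B) = y * (1 + y) ^ card A - y ^ (card A + 1) + y ^ card A"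
proof (induction A rule: finite_linorder_max_induct)
  case empty then show ?case by (simp add: wt_def)
next
  case (insert m A)
  have mA: "m \<notin> A" using insert by auto
  have inj: "inj_on (insert m) (Pow A)" using mA by (auto simp: inj_on_def)
  have disj: "Pow A \<inter> insert m ` Pow A = {}" using mA by auto
  have w1: "wt (insert m A) B = wt A B + (if B = {} then 1 else 0)" if B: "B \<subseteq> A" for B
  proof (cases "B = {}")
    case True
    have "{r \<in> insert m A. r \<in> B \<or> (\<forall>x\<in>B. r \<le> x)} = insert m A"
         "{r \<in> A. r \<in> B \<or> (\<forall>x\<in>B. r \<le> x)} = A" using True by auto
    then show ?thesis using insert mA True by (simp add: wt_def)
  next
    case False
    then obtain b where "b \<in> B" by blast
    then have "b < m" using B insert by auto
    then have "{r \<in> insert m A. r \<in> B \<or> (\<forall>x\<in>B. r \<le> x)} = {r \<in> A. r \<in> B \<or> (\<forall>x\<in>B. r \<le> x)}"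
      using mA B \<open>b \<in> B\<close> by auto
    then show ?thesis using False by (simp add: wt_def)
  qed
  have w2: "wt (insert m A) (insert m B) = Suc (wt A B)" if B: "B \<subseteq> A" for B
  proof -
    have "{r \<in> insert m A. r \<in> insert m B \<or> (\<forall>x\<in>insert m B. r \<le> x)} =
          insert m {r \<in> A. r \<in> B \<or> (\<forall>x\<in>B. r \<le> x)}"
      using insert(2) by auto
    then show ?thesis using mA insert(1) by (simp add: wt_def)
  qed
  have "(\<Sum>B\<in>Pow (insert m A). y ^ wt (insert m A) B) =
     (\<Sum>B\<in>Pow A. y ^ wt (insert m A) B) + (\<Sum>B\<in>insert m ` Pow A. y ^ wt (insert m A) B)"
    unfolding Pow_insert using insert(1) disj by (intro sum.union_disjoint) auto
  also have "(\<Sum>B\<in>insert m ` Pow A. y ^ wt (insert m A) B) = (\<Sum>B\<in>Pow A. y * y ^ wt A B)"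
    using inj w2 by (simp add: sum.reindex)
  also have "(\<Sum>B\<in>Pow A. y ^ wt (insert m A) B) = (\<Sum>B\<in>Pow A. y ^ wt A B + (if B = {} then y ^ card A * (y - 1) else 0))"
  proof (rule sum.cong)
    fix B assume "B \<in> Pow A"
    then show "y ^ wt (insert m A) B = y ^ wt A B + (if B = {} then y ^ card A * (y - 1) else 0)"
      using w1[of B] by (auto simp: wt_empty algebra_simps)
  qed simp
  also have "\<dots> = (\<Sum>B\<in>Pow A. y ^ wt A B) + y ^ card A * (y - 1)"
    using insert(1) by (simp add: sum.distrib)
  finally show ?case using insert mA by (simp add: sum_distrib_left[symmetric] algebra_simps)
qed



lemma sum_AV:
  assumes A: "finite A"
  shows "(\<Sum>H\<in>{H. H \<subseteq> insert 0 (Suc ` A) \<and> H \<noteq> {}}. (y::real) ^ card (AV A H))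
     = 2 * y * (1 + y) ^ card A - y ^ (card A + 1)"
proof -
  let ?f = "\<lambda>B. insert 0 (Suc ` B)" and ?g = "\<lambda>B. Suc ` B"
  have eq: "{H. H \<subseteq> insert 0 (Suc ` A) \<and> H \<noteq> {}} = ?f ` Pow A \<union> ?g ` (Pow A - {{}})"
  proof (rule set_eqI, rule iffI)
    fix H assume "H \<in> {H. H \<subseteq> insert 0 (Suc ` A) \<and> H \<noteq> {}}"
    then have H: "H \<subseteq> insert 0 (Suc ` A)" "H \<noteq> {}" by auto
    let ?B = "{r. Suc r \<in> H}"
    have B: "?B \<subseteq> A" using H by auto
    have "H - {0} = Suc ` ?B"
    proof (rule set_eqI)
      fix x show "x \<in> H - {0} \<longleftrightarrow> x \<in> Suc ` ?B" by (cases x) auto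
    qed
    show "H \<in> ?f ` Pow A \<union> ?g ` (Pow A - {{}})"
    proof (cases "0 \<in> H")
      case True
      then have e: "H = ?f ?B" using \<open>H - {0} = Suc ` ?B\<close> by blast
      have "H \<in> ?f ` Pow A" using e B by (intro image_eqI[of H ?f ?B]) simp_all
      then show ?thesis by (rule UnI1)
    next
      case False
      then have e: "H = ?g ?B" using \<open>H - {0} = Suc ` ?B\<close> by blast
      then have ne: "?B \<noteq> {}" using H(2) by auto
      have "H \<in> ?g ` (Pow A - {{}})" using e B ne by (intro image_eqI[of H ?g ?B]) simp_all
      then show ?thesis by (rule UnI2)
    qed
  next
    fix H assume "H \<in> ?f ` Pow A \<union> ?g ` (Pow A - {{}})"
    then show "H \<in> {H. H \<subseteq> insert 0 (Suc ` A) \<and> H \<noteq> {}}" by blast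
  qed
  have disj: "?f ` Pow A \<inter> ?g ` (Pow A - {{}}) = {}" by auto
  have inj1: "inj_on ?f (Pow A)"
  proof (rule inj_onI)
    fix B B' assume "?f B = ?f B'"
    then have "Suc ` B = Suc ` B'" by (metis Diff_insert_absorb Zero_not_Suc image_iff)
    then show "B = B'" by (simp add: inj_image_eq_iff)
  qed
  have inj2: "inj_on ?g (Pow A - {{}})" by (rule inj_onI) (simp add: inj_image_eq_iff)
  have c1: "card (AV A (?f B)) = Suc (card B)" if "B \<subseteq> A" for B
  proof -
    have "{r \<in> A. Suc r \<in> insert 0 (Suc ` B) \<or> (\<forall>x\<in>insert 0 (Suc ` B). r < x)} = B"
      using that by auto
    then have "AV A (?f B) = insert 0 (Suc ` B)" by (simp add: AV_def)
    moreover have "finite B" using that A finite_subset by auto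
    ultimately show ?thesis by (simp add: card_image)
  qed
  have c2: "card (AV A (?g B)) = wt A B" for B
  proof -
    have "{r \<in> A. Suc r \<in> Suc ` B \<or> (\<forall>x\<in>Suc ` B. r < x)} = {r \<in> A. r \<in> B \<or> (\<forall>x\<in>B. r \<le> x)}"
      by (auto simp: less_Suc_eq_le)
    then have "AV A (?g B) = Suc ` {r \<in> A. r \<in> B \<or> (\<forall>x\<in>B. r \<le> x)}"
      by (simp add: AV_def)
    then show ?thesis by (simp add: card_image wt_def)
  qed
  have "(\<Sum>H\<in>{H. H \<subseteq> insert 0 (Suc ` A) \<and> H \<noteq> {}}. y ^ card (AV A H)) =
     (\<Sum>H\<in>?f ` Pow A. y ^ card (AV A H)) + (\<Sum>H\<in>?g ` (Pow A - {{}}). y ^ card (AV A H))"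
    unfolding eq using A disj by (intro sum.union_disjoint) auto
  also have "(\<Sum>H\<in>?f ` Pow A. y ^ card (AV A H)) = (\<Sum>B\<in>Pow A. y * y ^ card B)"
    using inj1 c1 by (simp add: sum.reindex)
  also have "(\<Sum>H\<in>?g ` (Pow A - {{}}). y ^ card (AV A H)) = (\<Sum>B\<in>Pow A - {{}}. y ^ wt A B)"
    using inj2 c2 by (simp add: sum.reindex)
  also have "\<dots> = (\<Sum>B\<in>Pow A. y ^ wt A B) - y ^ card A"
    using A by (simp add: sum_diff1 wt_empty)
  finally show ?thesis using A by (simp add: sum_distrib_left[symmetric] sum_pow_card sum_wt algebra_simps)
qed



definition Phi :: "step list \<Rightarrow> real \<Rightarrow> real" where
  "Phi w y = (\<Sum>f\<in>Tab w. y ^ card (avail w f))"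

lemma Phi_Nil: "Phi [] y = 1"
  by (simp add: Phi_def Tab_Nil avail_Nil)

lemma Phi_S: "Phi (w @ [South]) y = y * Phi w y"
  by (simp add: Phi_def Tab_S card_avail_S sum_distrib_left)

lemma Tab_W_eq: "Tab (w @ [West]) = (\<lambda>(g, H). ext g H) ` Sigma (Tab w) (HS w)"
  using Tab_W_decomp[of _ w] ext_Tab[of _ w] by fastforce

lemma finite_HS: "finite (HS w g)"
proof -
  have "HS w g \<subseteq> Pow (insert 0 (Suc ` avail w g))" by (auto simp: HS_def)
  then show ?thesis using finite_avail by (meson finite_Pow_iff finite_imageI finite_insert finite_subset)
qed

lemma Phi_W: "Phi (w @ [West]) y = 2 * y * Phi w (1 + y) - y * Phi w y"
proof -
  have inj: "inj_on (\<lambda>(g, H). ext g H) (Sigma (Tab w) (HS w))"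
    by (rule inj_onI) (auto dest: ext_inj)
  have "Phi (w @ [West]) y = (\<Sum>p\<in>Sigma (Tab w) (HS w). y ^ card (avail (w @ [West]) (case p of (g, H) \<Rightarrow> ext g H)))"
    unfolding Phi_def Tab_W_eq using inj by (simp add: sum.reindex)
  also have "\<dots> = (\<Sum>(g, H)\<in>Sigma (Tab w) (HS w). y ^ card (avail (w @ [West]) (ext g H)))"
    by (simp add: split_beta)
  also have "\<dots> = (\<Sum>g\<in>Tab w. \<Sum>H\<in>HS w g. y ^ card (avail (w @ [West]) (ext g H)))"
    using Tab_finite finite_HS by (subst sum.Sigma) auto
  also have "\<dots> = (\<Sum>g\<in>Tab w. 2 * y * (1 + y) ^ card (avail w g) - y * y ^ card (avail w g))"
  proof (rule sum.cong)
    fix g assume g: "g \<in> Tab w"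
    have "(\<Sum>H\<in>HS w g. y ^ card (avail (w @ [West]) (ext g H))) = (\<Sum>H\<in>HS w g. y ^ card (AV (avail w g) H))"
      using avail_ext[OF g] by simp
    also have "\<dots> = 2 * y * (1 + y) ^ card (avail w g) - y ^ (card (avail w g) + 1)"
      unfolding HS_def by (rule sum_AV[OF finite_avail])
    finally show "(\<Sum>H\<in>HS w g. y ^ card (avail (w @ [West]) (ext g H))) = 2 * y * (1 + y) ^ card (avail w g) - y * y ^ card (avail w g)"
      by simp
  qed simp
  also have "\<dots> = 2 * y * Phi w (1 + y) - y * Phi w y"
    by (simp add: Phi_def sum_subtractf sum_distrib_left)
  finally show ?thesis .
qed



definition Wn :: "nat \<Rightarrow> step list set" where "Wn n = {w. length w = n}"

lemma Wn_0: "Wn 0 = {[]}" by (auto simp: Wn_def)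

lemma Wn_Suc: "Wn (Suc n) = Cons South ` Wn n \<union> Cons West ` Wn n"
proof (rule set_eqI, rule iffI)
  fix w assume "w \<in> Wn (Suc n)"
  then obtain x s where "w = x # s" "length s = n" by (auto simp: Wn_def length_Suc_conv)
  then show "w \<in> Cons South ` Wn n \<union> Cons West ` Wn n" by (cases x) (auto simp: Wn_def)
qed (auto simp: Wn_def)

lemma finite_Wn: "finite (Wn n)"
  by (induction n) (simp_all add: Wn_0 Wn_Suc)

lemma sum_Wn_Suc: "(\<Sum>w\<in>Wn (Suc n). F w) = (\<Sum>s\<in>Wn n. F (South # s) + F (West # s))"
proof -
  have "(\<Sum>w\<in>Wn (Suc n). F w) = (\<Sum>w\<in>Cons South ` Wn n. F w) + (\<Sum>w\<in>Cons West ` Wn n. F w)"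
    unfolding Wn_Suc by (rule sum.union_disjoint) (auto simp: finite_Wn)
  also have "\<dots> = (\<Sum>s\<in>Wn n. F (South # s)) + (\<Sum>s\<in>Wn n. F (West # s))"
    by (simp add: sum.reindex)
  finally show ?thesis by (simp add: sum.distrib)
qed

lemma sum_Wn_add: "(\<Sum>w\<in>Wn (a + b). F w) = (\<Sum>p\<in>Wn a. \<Sum>s\<in>Wn b. F (p @ s))"
proof (induction a arbitrary: F)
  case 0 then show ?case by (simp add: Wn_0)
next
  case (Suc a)
  have "(\<Sum>w\<in>Wn (Suc a + b). F w) = (\<Sum>s\<in>Wn (a + b). F (South # s) + F (West # s))"
    using sum_Wn_Suc[where n="a + b"] by simp
  also have "\<dots> = (\<Sum>p\<in>Wn a. \<Sum>s\<in>Wn b. F (South # p @ s) + F (West # p @ s))"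
    using Suc[of "\<lambda>s. F (South # s) + F (West # s)"] by simp
  also have "\<dots> = (\<Sum>p\<in>Wn (Suc a). \<Sum>s\<in>Wn b. F (p @ s))"
    by (simp add: sum_Wn_Suc sum.distrib)
  finally show ?case .
qed

lemma sum_Phi_ext: "(\<Sum>s\<in>Wn r. Phi (q @ s) y) = 2 ^ r * pochhammer y r * Phi q (y + real r)"
proof (induction r arbitrary: q y)
  case 0 then show ?case by (simp add: Wn_0)
next
  case (Suc r)
  have "(\<Sum>s\<in>Wn (Suc r). Phi (q @ s) y) = (\<Sum>s\<in>Wn r. Phi ((q @ [South]) @ s) y + Phi ((q @ [West]) @ s) y)"
    by (simp add: sum_Wn_Suc)
  also have "\<dots> = 2 ^ r * pochhammer y r * (Phi (q @ [South]) (y + real r) + Phi (q @ [West]) (y + real r))"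
  proof -
    have h1: "(\<Sum>s\<in>Wn r. Phi ((q @ [South]) @ s) y) = 2 ^ r * pochhammer y r * Phi (q @ [South]) (y + real r)"
      by (rule Suc.IH)
    have h2: "(\<Sum>s\<in>Wn r. Phi ((q @ [West]) @ s) y) = 2 ^ r * pochhammer y r * Phi (q @ [West]) (y + real r)"
      by (rule Suc.IH)
    show ?thesis by (simp only: sum.distrib h1 h2 distrib_left)
  qed
  also have "\<dots> = 2 ^ r * pochhammer y r * (2 * (y + real r) * Phi q (1 + (y + real r)))"
    by (simp add: Phi_S Phi_W algebra_simps)
  also have "1 + (y + real r) = y + real (Suc r)" by simp
  finally show ?case by (simp add: pochhammer_Suc algebra_simps)
qed

lemma Psi: "(\<Sum>w\<in>Wn n. Phi w y) = 2 ^ n * pochhammer y n"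
  using sum_Phi_ext[where r=n and q="[]" and y=y] by (simp add: Phi_Nil)

lemma card_Tab: "real (card (Tab w)) = Phi w 1"
  by (simp add: Phi_def)

lemma isB_len: "is_typeB_tableau n w f \<Longrightarrow> length w = n"
  by (simp add: is_typeB_tableau_def)

lemma typeB_eq: "typeB_tableaux n = Sigma (Wn n) Tab"
  by (auto simp: typeB_tableaux_def Wn_def Tab_def dest: isB_len) (metis isB_len)

lemma card_typeB: "real (card (typeB_tableaux n)) = 2 ^ n * fact n"
proof -
  have "card (typeB_tableaux n) = (\<Sum>w\<in>Wn n. card (Tab w))"
    unfolding typeB_eq by (rule card_SigmaI) (auto simp: finite_Wn Tab_finite)
  then have "real (card (typeB_tableaux n)) = (\<Sum>w\<in>Wn n. Phi w 1)"
    by (simp add: card_Tab[symmetric])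
  then show ?thesis by (simp add: Psi pochhammer_fact)
qed

lemma sum_WW_tab: "(\<Sum>T\<in>typeB_tableaux n. real (WW_count n (fst T))) = (\<Sum>w\<in>Wn n. real (WW_count n w) * Phi w 1)"
proof -
  have "(\<Sum>T\<in>typeB_tableaux n. real (WW_count n (fst T))) = (\<Sum>w\<in>Wn n. \<Sum>f\<in>Tab w. real (WW_count n w))"
    unfolding typeB_eq by (subst sum.Sigma) (auto simp: finite_Wn Tab_finite split_beta)
  then show ?thesis by (simp add: card_Tab[symmetric] mult.commute)
qed



lemma WW_sum:
  assumes "n \<ge> 2"
  shows "real (WW_count n w) = (\<Sum>j<n-1. if w ! j = West \<and> w ! Suc j = West then 1 else 0)"
proof -
  let ?Q = "\<lambda>j. w ! j = West \<and> w ! Suc j = West"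
  have im: "{k \<in> {2..n}. w ! (k - 2) = West \<and> w ! (k - 1) = West} = (\<lambda>j. j + 2) ` {j \<in> {..<n-1}. ?Q j}"
  proof (rule set_eqI, rule iffI)
    fix k assume k: "k \<in> {k \<in> {2..n}. w ! (k - 2) = West \<and> w ! (k - 1) = West}"
    then have "k = (k - 2) + 2" "k - 2 \<in> {j \<in> {..<n-1}. ?Q j}"
      by (auto simp: Suc_diff_Suc numeral_2_eq_2)
    then show "k \<in> (\<lambda>j. j + 2) ` {j \<in> {..<n-1}. ?Q j}" by blast
  qed (auto simp: numeral_2_eq_2)
  have "WW_count n w = card {j \<in> {..<n-1}. ?Q j}"
    unfolding WW_count_def im by (rule card_image) (simp add: inj_on_def)
  also have "\<dots> = (\<Sum>j\<in>{j \<in> {..<n-1}. ?Q j}. 1)" by simp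
  also have "\<dots> = (\<Sum>j<n-1. if ?Q j then 1 else 0)" by (rule sum.inter_filter) simp
  finally show ?thesis by (auto simp: of_nat_sum intro!: sum.cong)
qed

lemma fact_poch: "fact m * pochhammer (real m + 1) j = (fact (m + j) :: real)"
proof (induction j)
  case 0 then show ?case by simp
next
  case (Suc j)
  have "fact m * pochhammer (real m + 1) (Suc j) = fact (m + j) * (real m + 1 + real j)"
    using Suc by (simp add: pochhammer_Suc mult.assoc[symmetric])
  also have "\<dots> = fact (m + Suc j)" by (simp add: algebra_simps)
  finally show ?case .
qed

lemma Phi_WW: "Phi (p @ [West, West]) x =
   2 * x * (2 * (1 + x) * Phi p (1 + (1 + x)) - (1 + x) * Phi p (1 + x)) - x * (2 * x * Phi p (1 + x) - x * Phi p x)"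
proof -
  have "p @ [West, West] = (p @ [West]) @ [West]" by simp
  then show ?thesis by (simp only: Phi_W)
qed

lemma count_j:
  "(\<Sum>w\<in>Wn (j + (2 + r)). if w ! j = West \<and> w ! Suc j = West then Phi w 1 else 0)
   = 2 ^ (j + r) * fact (j + r) * (4 * (real (j + r) + 2) * (real (j + r) + 1)
      - 2 * (2 * real r + 3) * (real (j + r) + 1) + (real r + 1) ^ 2)"
proof -
  let ?F = "\<lambda>w. if w ! j = West \<and> w ! Suc j = West then Phi w 1 else 0"
  define x :: real where "x = 1 + real r"
  have "(\<Sum>w\<in>Wn (j + (2 + r)). ?F w) = (\<Sum>p\<in>Wn j. \<Sum>s\<in>Wn (2 + r). ?F (p @ s))"
    by (rule sum_Wn_add)
  also have "\<dots> = (\<Sum>p\<in>Wn j. \<Sum>m\<in>Wn 2. \<Sum>s\<in>Wn r. ?F (p @ m @ s))"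
    by (simp only: sum_Wn_add)
  also have "\<dots> = (\<Sum>p\<in>Wn j. \<Sum>s\<in>Wn r. Phi (p @ [West, West] @ s) 1)"
  proof (rule sum.cong)
    fix p assume "p \<in> Wn j"
    then have lp: "length p = j" by (simp add: Wn_def)
    show "(\<Sum>m\<in>Wn 2. \<Sum>s\<in>Wn r. ?F (p @ m @ s)) = (\<Sum>s\<in>Wn r. Phi (p @ [West, West] @ s) 1)"
      by (simp add: numeral_2_eq_2 sum_Wn_Suc Wn_0 nth_append lp)
  qed simp
  also have "\<dots> = (\<Sum>p\<in>Wn j. 2 ^ r * fact r * Phi (p @ [West, West]) x)"
  proof (rule sum.cong)
    fix p
    show "(\<Sum>s\<in>Wn r. Phi (p @ [West, West] @ s) 1) = 2 ^ r * fact r * Phi (p @ [West, West]) x"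
      using sum_Phi_ext[where r=r and q="p @ [West, West]" and y=1]
      by (simp add: x_def pochhammer_fact add.commute)
  qed simp
  also have "\<dots> = 2 ^ r * fact r * (2 * x * (2 * (1 + x) * (2 ^ j * pochhammer (1 + (1 + x)) j)
       - (1 + x) * (2 ^ j * pochhammer (1 + x) j)) - x * (2 * x * (2 ^ j * pochhammer (1 + x) j) - x * (2 ^ j * pochhammer x j)))"
    by (simp add: Phi_WW sum_distrib_left[symmetric] sum_subtractf Psi)
  also have "\<dots> = 2 ^ (j + r) * (4 * (x * (1 + x) * fact r * pochhammer (1 + (1 + x)) j)
       - 2 * (1 + x) * (x * fact r * pochhammer (1 + x) j) - 2 * x * (x * fact r * pochhammer (1 + x) j) + x^2 * (fact r * pochhammer x j))"
    by (simp add: power_add algebra_simps power2_eq_square)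
  also have "x * (1 + x) * fact r * pochhammer (1 + (1 + x)) j = fact (r + 2 + j)"
  proof -
    have "x * (1 + x) * fact r = (fact (r + 2) :: real)" by (simp add: x_def numeral_2_eq_2 algebra_simps)
    moreover have "1 + (1 + x) = real (r + 2) + 1" by (simp add: x_def)
    ultimately show ?thesis using fact_poch[of "r + 2" j] by (simp add: ac_simps)
  qed
  also have "x * fact r * pochhammer (1 + x) j = fact (r + 1 + j)"
  proof -
    have "x * fact r = (fact (r + 1) :: real)" by (simp add: x_def algebra_simps)
    moreover have "1 + x = real (r + 1) + 1" by (simp add: x_def)
    ultimately show ?thesis using fact_poch[of "r + 1" j] by simp
  qed
  also have "fact r * pochhammer x j = fact (r + j)"
    using fact_poch[of r j] by (simp add: x_def add.commute)
  also have "(fact (r + 2 + j) :: real) = (real (j + r) + 2) * (real (j + r) + 1) * fact (j + r)"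
    by (simp add: numeral_2_eq_2 algebra_simps)
  also have "(fact (r + 1 + j) :: real) = (real (j + r) + 1) * fact (j + r)"
    by (simp add: algebra_simps)
  finally show ?thesis by (simp add: x_def algebra_simps power2_eq_square)
qed

lemma sumS: "(\<Sum>i<m. 4 * N * (N - 1) - 2 * (2 * real i + 3) * (N - 1) + (real i + 1) ^ 2)
   = 4 * N * (N - 1) * real m - 2 * (N - 1) * real m * (real m + 2) + real m * (real m + 1) * (2 * real m + 1) / 6"
  by (induction m) (simp_all add: algebra_simps power2_eq_square add_divide_distrib)



theorem mainTheorem11:
  fixes n :: nat
  assumes "n \<ge> 2"
  shows "(\<Sum>T\<in>typeB_tableaux n. real (WW_count n (fst T))) / real (card (typeB_tableaux n))
           = (14 * real n - 25) / 24 + 1 / (2 * real n)"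
proof -
  obtain M where n: "n = M + 2" using assms by (metis add.commute le_add_diff_inverse)
  let ?g = "\<lambda>i. 4 * (real M + 2) * (real M + 1) - 2 * (2 * real i + 3) * (real M + 1) + (real i + 1) ^ 2"
  have "(\<Sum>T\<in>typeB_tableaux n. real (WW_count n (fst T)))
      = (\<Sum>w\<in>Wn n. (\<Sum>j<n-1. if w ! j = West \<and> w ! Suc j = West then 1 else 0) * Phi w 1)"
    unfolding sum_WW_tab using WW_sum[OF assms] by (intro sum.cong) (auto simp: Wn_def)
  also have "\<dots> = (\<Sum>j<n-1. \<Sum>w\<in>Wn n. if w ! j = West \<and> w ! Suc j = West then Phi w 1 else 0)"
  proof -
    have e: "\<And>P (x::real). (if P then 1 else 0) * x = (if P then x else 0)" by simp
    show ?thesis unfolding sum_distrib_right e by (rule sum.swap)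
  qed
  also have "\<dots> = (\<Sum>j<M+1. 2 ^ M * fact M * ?g (M - j))"
  proof (rule sum.cong)
    fix j assume "j \<in> {..<M+1}"
    then have j: "j \<le> M" by simp
    have e: "n = j + (2 + (M - j))" "j + (M - j) = M" using j n by auto
    show "(\<Sum>w\<in>Wn n. if w ! j = West \<and> w ! Suc j = West then Phi w 1 else 0) = 2 ^ M * fact M * ?g (M - j)"
      unfolding e(1) count_j e(2) by simp
  qed (simp add: n)
  also have "\<dots> = 2 ^ M * fact M * (\<Sum>j<M+1. ?g (M - j))"
    by (simp only: sum_distrib_left)
  also have "(\<Sum>j<M+1. ?g (M - j)) = (\<Sum>i<M+1. ?g i)"
  proof -
    have "(\<Sum>j<Suc M. ?g (Suc M - Suc j)) = (\<Sum>i<Suc M. ?g i)" by (rule sum.nat_diff_reindex)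
    then show ?thesis by (simp only: diff_Suc_Suc Suc_eq_plus1 add_diff_cancel_right)
  qed
  also have "(\<Sum>i<M+1. ?g i) = 4 * (real M + 2) * (real M + 1) * real (M+1) - 2 * (real M + 1) * real (M+1) * (real (M+1) + 2)
      + real (M+1) * (real (M+1) + 1) * (2 * real (M+1) + 1) / 6"
    using sumS[where m="M+1" and N="real M + 2"] by (simp add: algebra_simps)
  finally have num: "(\<Sum>T\<in>typeB_tableaux n. real (WW_count n (fst T))) = 2 ^ M * fact M *
      (4 * (real M + 2) * (real M + 1) * real (M+1) - 2 * (real M + 1) * real (M+1) * (real (M+1) + 2)
      + real (M+1) * (real (M+1) + 1) * (2 * real (M+1) + 1) / 6)" .
  have den: "real (card (typeB_tableaux n)) = 2 ^ M * fact M * (4 * (real M + 1) * (real M + 2))"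
    unfolding card_typeB n by (simp add: numeral_2_eq_2 power_add algebra_simps)
  have pos: "(2::real) ^ M * fact M > 0" by simp
  have rn: "real n = real M + 2" using n by simp
  define m where "m = real M"
  have m0: "m \<ge> 0" by (simp add: m_def)
  define K where "K = (2::real) ^ M * fact M"
  have K: "K > 0" using pos by (simp add: K_def)
  have num': "(\<Sum>T\<in>typeB_tableaux n. real (WW_count n (fst T))) = K *
      (4 * (m + 2) * (m + 1) * (m + 1) - 2 * (m + 1) * (m + 1) * (m + 1 + 2)
      + (m + 1) * (m + 1 + 1) * (2 * (m + 1) + 1) / 6)"
    unfolding num K_def m_def by (simp add: add.commute)
  have den': "real (card (typeB_tableaux n)) = K * (4 * (m + 1) * (m + 2))"
    unfolding den K_def m_def by simp
  have B: "4 * (m + 1) * (m + 2) > 0" using m0 by (simp add: mult_pos_pos)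
  have "(4 * (m + 2) * (m + 1) * (m + 1) - 2 * (m + 1) * (m + 1) * (m + 1 + 2)
      + (m + 1) * (m + 1 + 1) * (2 * (m + 1) + 1) / 6) / (4 * (m + 1) * (m + 2))
      = (14 * (m + 2) - 25) / 24 + 1 / (2 * (m + 2))"
  proof -
    have h1: "m + 1 \<noteq> 0" "m + 2 \<noteq> 0" using m0 by linarith+
    have "4 * (m + 2) * (m + 1) * (m + 1) - 2 * (m + 1) * (m + 1) * (m + 1 + 2)
      + (m + 1) * (m + 1 + 1) * (2 * (m + 1) + 1) / 6 =
      ((14 * (m + 2) - 25) / 24 + 1 / (2 * (m + 2))) * (4 * (m + 1) * (m + 2))"
      using h1 by (simp add: field_simps)
    then show ?thesis using B h1 by (simp add: nonzero_divide_eq_eq)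
  qed
  then show ?thesis unfolding num' den' rn m_def[symmetric] using K by simp
qed

end
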